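(* Let $k\ge 4$ be an even integer. Then there exists an intersecting family $\mathcal{F}\subset\binom{[2k]}{k}$ such that $$\mathcal{D}(\mathcal{F})=\bigcup_{j=0}^{k-1}\binom{[2k]}{j}.$$ In particular $\binom{[2k]}{k-1}\subset\mathcal{D}(\mathcal{F})$.
   Context: $[m]=\{1,2,\dots,m\}$. For a set $S$ and an integer $j\ge 0$, $\binom{S}{j}$ denotes the family of all $j$-element subsets of $S$. For a family $\mathcal{F}$ of sets, $\mathcal{D}(\mathcal{F})=\{F\setminus F' : F,F'\in\mathcal{F}\}$ (the family of difference sets). A family $\mathcal{F}$ is intersecting if $F\cap F'\neq\emptyset$ for all $F,F'\in\mathcal{F}$. *)

theory Defs
  imports Main
begin

definition ksubsets :: "'a set \<Rightarrow> nat \<Rightarrow> 'a set set" where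
  "ksubsets S j = {A. A \<subseteq> S \<and> card A = j}"

definition diff_family :: "'a set set \<Rightarrow> 'a set set" where
  "diff_family F = {A - B | A B. A \<in> F \<and> B \<in> F}"

definition intersecting :: "'a set set \<Rightarrow> bool" where
  "intersecting F \<longleftrightarrow> (\<forall>A\<in>F. \<forall>B\<in>F. A \<inter> B \<noteq> {})"

end

theory Submission
  imports Defs
begin

definition Os :: "nat \<Rightarrow> nat set" where "Os k = {1..k-1}"
definition Ms :: "nat \<Rightarrow> nat set" where "Ms k = {k..2*k-2}"
definition Us :: "nat \<Rightarrow> nat set" where "Us k = {1..2*k}"

definition psi :: "nat \<Rightarrow> nat set \<Rightarrow> bool" where
  "psi k A = ((odd (card (A \<inter> Os k)) \<and> card (A \<inter> Os k) \<noteq> k-1) \<or>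
     (card (A \<inter> Os k) = k-2 \<and> (\<lambda>w. w+k-1) ` (Os k - A) = A \<inter> Ms k))"

definition phi :: "nat \<Rightarrow> nat set \<Rightarrow> bool" where
  "phi k A = (if 2*k \<in> A \<and> 2*k-1 \<notin> A then psi k A
      else if 2*k-1 \<in> A \<and> 2*k \<notin> A then \<not> psi k (Us k - A)
      else odd (card (A \<inter> Os k)))"

definition FF :: "nat \<Rightarrow> nat set set" where
  "FF k = {A. A \<subseteq> Us k \<and> card A = k \<and> phi k A}"

lemma fin_U[simp]: "finite (Us k)" "finite (Os k)" "finite (Ms k)"
  by (auto simp: Us_def Os_def Ms_def)

lemma card_O[simp]: "card (Os k) = k-1" by (simp add: Os_def)
lemma card_M: "k \<ge> 1 \<Longrightarrow> card (Ms k) = k-1" by (simp add: Ms_def)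

lemma O_sub: "Os k \<subseteq> Us k" by (auto simp: Os_def Us_def)
lemma M_sub: "k \<ge> 1 \<Longrightarrow> Ms k \<subseteq> Us k" by (auto simp: Ms_def Us_def)
lemma OM_disj: "Os k \<inter> Ms k = {}" by (auto simp: Os_def Ms_def)
lemma v_notO: "2*k-1 \<notin> Os k" "2*k \<notin> Os k" by (auto simp: Os_def)
lemma v_notM: "k \<ge> 1 \<Longrightarrow> 2*k-1 \<notin> Ms k \<and> 2*k \<notin> Ms k" by (auto simp: Ms_def)
lemma v_U: "k \<ge> 1 \<Longrightarrow> 2*k-1 \<in> Us k \<and> 2*k \<in> Us k" by (auto simp: Us_def)
lemma U_split: "k \<ge> 1 \<Longrightarrow> Us k = Os k \<union> Ms k \<union> {2*k-1, 2*k}"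
  by (auto simp: Us_def Os_def Ms_def)

lemma card_part:
  assumes "k \<ge> 1" "D \<subseteq> Us k"
  shows "card D = card (D \<inter> Os k) + card (D \<inter> Ms k) + card (D \<inter> {2*k-1, 2*k})"
proof -
  have fD: "finite D" using finite_subset[OF assms(2) fin_U(1)] .
  have sub: "D \<subseteq> Os k \<union> Ms k \<union> {2*k-1, 2*k}" using assms(2) U_split[OF assms(1)] by simp
  have e: "D = (D \<inter> Os k) \<union> (D \<inter> Ms k) \<union> (D \<inter> {2*k-1, 2*k})"
    using sub by auto
  have "card D = card ((D \<inter> Os k) \<union> (D \<inter> Ms k) \<union> (D \<inter> {2*k-1, 2*k}))"
    using arg_cong[OF e, of card] .
  also have "\<dots> = card (D \<inter> Os k) + card (D \<inter> Ms k) + card (D \<inter> {2*k-1, 2*k})"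
  proof -
    have d1: "(D \<inter> Os k) \<inter> (D \<inter> Ms k) = {}" using OM_disj[of k] by auto
    have n1: "2*k-1 \<notin> Os k \<union> Ms k" "2*k \<notin> Os k \<union> Ms k" using v_notO[of k] v_notM[OF assms(1)] by auto
    have d2: "((D \<inter> Os k) \<union> (D \<inter> Ms k)) \<inter> (D \<inter> {2*k-1, 2*k}) = {}"
      using n1 by auto
    show ?thesis using fD d1 d2 by (simp add: card_Un_disjoint)
  qed
  finally show ?thesis .
qed

lemma card_compl_O:
  assumes "A \<subseteq> Us k"
  shows "card ((Us k - A) \<inter> Os k) = k - 1 - card (A \<inter> Os k)"
proof -
  have "(Us k - A) \<inter> Os k = Os k - (A \<inter> Os k)" using O_sub[of k] by blast
  thus ?thesis by (simp add: card_Diff_subset)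
qed

lemma card_AO_le: "card (A \<inter> Os k) \<le> k - 1"
  by (metis card_O card_mono fin_U(2) inf_le2)

lemma par_lemma: "c \<le> k - 1 \<Longrightarrow> even k \<Longrightarrow> k \<ge> 1 \<Longrightarrow> odd (k - 1 - c) \<longleftrightarrow> \<not> odd (c::nat)"
proof -
  assume h: "c \<le> k - 1" "even k" "k \<ge> 1"
  then obtain j where j: "k = 2*j" "j \<ge> 1" by (auto elim!: evenE)
  have "k - 1 - c = 2*j - 1 - c" using j by simp
  thus ?thesis using h j by (auto simp: even_diff_nat)
qed

lemma phi_compl:
  assumes "k \<ge> 4" "even k" "A \<subseteq> Us k"
  shows "phi k (Us k - A) \<longleftrightarrow> \<not> phi k A"
proof -
  have k1: "k \<ge> 1" using assms by simp
  have UA: "Us k - (Us k - A) = A" using assms(3) by blast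
  have c: "card ((Us k - A) \<inter> Os k) = k - 1 - card (A \<inter> Os k)" using card_compl_O[OF assms(3)] .
  have le: "card (A \<inter> Os k) \<le> k - 1" by (rule card_AO_le)
  have par: "odd (k - 1 - card (A \<inter> Os k)) \<longleftrightarrow> \<not> odd (card (A \<inter> Os k))"
    by (rule par_lemma[OF le assms(2)]) (use assms(1) in simp)
  have vU: "2*k-1 \<in> Us k" "2*k \<in> Us k" using v_U k1 by auto
  have ne: "2*k-1 \<noteq> 2*k" using k1 by simp
  show ?thesis
  proof (cases "2*k \<in> A")
    case T1: True
    show ?thesis
    proof (cases "2*k-1 \<in> A")
      case True
      then show ?thesis using T1 c par unfolding phi_def by auto
    next
      case False
      then show ?thesis using T1 vU ne UA unfolding phi_def by auto
    qed
  next
    case F1: False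
    show ?thesis
    proof (cases "2*k-1 \<in> A")
      case True
      then show ?thesis using F1 vU ne UA unfolding phi_def by auto
    next
      case False
      then show ?thesis using F1 vU c par unfolding phi_def by auto
    qed
  qed
qed


lemma phi_plain: "(2*k \<in> A \<longleftrightarrow> 2*k-1 \<in> A) \<Longrightarrow> phi k A \<longleftrightarrow> odd (card (A \<inter> Os k))"
  unfolding phi_def by auto

lemma phi_y: "2*k \<in> A \<Longrightarrow> 2*k-1 \<notin> A \<Longrightarrow> odd (card (A \<inter> Os k)) \<Longrightarrow> card (A \<inter> Os k) \<noteq> k-1 \<Longrightarrow> phi k A"
  unfolding phi_def psi_def by auto

lemma nphi_y: "k \<ge> 4 \<Longrightarrow> 2*k \<in> A \<Longrightarrow> 2*k-1 \<notin> A \<Longrightarrow>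
   (even (card (A \<inter> Os k)) \<and> card (A \<inter> Os k) \<noteq> k-2) \<or> card (A \<inter> Os k) = k-1 \<Longrightarrow> \<not> phi k A"
  unfolding phi_def psi_def by auto

lemma phi_v:
  assumes "k \<ge> 4" "even k" "A \<subseteq> Us k" "2*k-1 \<in> A" "2*k \<notin> A"
    "card (A \<inter> Os k) = 0 \<or> (odd (card (A \<inter> Os k)) \<and> card (A \<inter> Os k) \<noteq> 1)"
  shows "phi k A"
proof -
  have c: "card ((Us k - A) \<inter> Os k) = k - 1 - card (A \<inter> Os k)" using card_compl_O[OF assms(3)] .
  have le: "card (A \<inter> Os k) \<le> k - 1" by (rule card_AO_le)
  have par: "odd (k - 1 - card (A \<inter> Os k)) \<longleftrightarrow> \<not> odd (card (A \<inter> Os k))"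
    by (rule par_lemma[OF le assms(2)]) (use assms(1) in simp)
  have "\<not> psi k (Us k - A)"
    unfolding psi_def c using par assms(1,6) le by auto
  thus ?thesis using assms(4,5) unfolding phi_def by auto
qed

lemma nphi_v:
  assumes "k \<ge> 4" "even k" "A \<subseteq> Us k" "2*k-1 \<in> A" "2*k \<notin> A"
    "even (card (A \<inter> Os k))" "card (A \<inter> Os k) \<ge> 2"
  shows "\<not> phi k A"
proof -
  have c: "card ((Us k - A) \<inter> Os k) = k - 1 - card (A \<inter> Os k)" using card_compl_O[OF assms(3)] .
  have le: "card (A \<inter> Os k) \<le> k - 1" by (rule card_AO_le)
  have par: "odd (k - 1 - card (A \<inter> Os k)) \<longleftrightarrow> \<not> odd (card (A \<inter> Os k))"
    by (rule par_lemma[OF le assms(2)]) (use assms(1) in simp)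
  have "psi k (Us k - A)"
    unfolding psi_def c using par assms(1,6,7) le by auto
  thus ?thesis using assms(4,5) unfolding phi_def by auto
qed


lemma build:
  assumes k1: "k \<ge> 1" and DU: "D \<subseteq> Us k"
  and EA: "EA \<subseteq> {2*k-1, 2*k} - D" and EC: "EC \<subseteq> {2*k-1, 2*k} - D" and EAC: "EA \<inter> EC = {}"
  and c1: "p1 + q1 \<le> card (Os k - D)" and c2: "p2 + q2 \<le> card (Ms k - D)"
  and sA: "card D + card EA + p1 + p2 = k" and sC: "card D + card EC + q1 + q2 = k"
  shows "\<exists>A C. A \<subseteq> Us k \<and> C \<subseteq> Us k \<and> card A = k \<and> card C = k \<and> A \<inter> C = D \<and>
     card (A \<inter> Os k) = card (D \<inter> Os k) + p1 \<and> card (C \<inter> Os k) = card (D \<inter> Os k) + q1 \<and>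
     A \<inter> {2*k-1, 2*k} = (D \<union> EA) \<inter> {2*k-1, 2*k} \<and> C \<inter> {2*k-1, 2*k} = (D \<union> EC) \<inter> {2*k-1, 2*k}"
proof -
  define X where "X = Os k - D"
  define Y where "Y = Ms k - D"
  have fX: "finite X" and fY: "finite Y" unfolding X_def Y_def by auto
  have fD: "finite D" using finite_subset[OF DU fin_U(1)] .
  have fEA: "finite EA" using EA finite_subset by auto
  have fEC: "finite EC" using EC finite_subset by auto
  obtain P1 where P1: "P1 \<subseteq> X" "card P1 = p1" "finite P1"
    using obtain_subset_with_card_n[of p1 X] c1 unfolding X_def by auto
  have "q1 \<le> card (X - P1)" using c1 P1 fX unfolding X_def[symmetric] by (simp add: card_Diff_subset)
  then obtain Q1 where Q1: "Q1 \<subseteq> X - P1" "card Q1 = q1" "finite Q1"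
    using obtain_subset_with_card_n[of q1 "X - P1"] by auto
  obtain P2 where P2: "P2 \<subseteq> Y" "card P2 = p2" "finite P2"
    using obtain_subset_with_card_n[of p2 Y] c2 unfolding Y_def by auto
  have "q2 \<le> card (Y - P2)" using c2 P2 fY unfolding Y_def[symmetric] by (simp add: card_Diff_subset)
  then obtain Q2 where Q2: "Q2 \<subseteq> Y - P2" "card Q2 = q2" "finite Q2"
    using obtain_subset_with_card_n[of q2 "Y - P2"] by auto
  have n1: "2*k-1 \<notin> Os k" "2*k \<notin> Os k" using v_notO[of k] by auto
  have n2: "2*k-1 \<notin> Ms k" "2*k \<notin> Ms k" using v_notM[OF k1] by auto
  have XO: "X \<subseteq> Os k" "X \<inter> D = {}" unfolding X_def by auto
  have YM: "Y \<subseteq> Ms k" "Y \<inter> D = {}" unfolding Y_def by auto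
  have OM: "Os k \<inter> Ms k = {}" by (rule OM_disj)
  define A where "A = D \<union> EA \<union> P1 \<union> P2"
  define C where "C = D \<union> EC \<union> Q1 \<union> Q2"
  have EAs: "EA \<subseteq> {2*k-1, 2*k}" "EA \<inter> D = {}" using EA by auto
  have ECs: "EC \<subseteq> {2*k-1, 2*k}" "EC \<inter> D = {}" using EC by auto
  have EAO: "EA \<inter> Os k = {}" "EA \<inter> Ms k = {}" using EAs n1 n2 by auto
  have ECO: "EC \<inter> Os k = {}" "EC \<inter> Ms k = {}" using ECs n1 n2 by auto
  have AU: "A \<subseteq> Us k" unfolding A_def using DU EAs P1(1) P2(1) XO YM O_sub[of k] M_sub[OF k1] v_U[OF k1] by auto
  have CU: "C \<subseteq> Us k" unfolding C_def using DU ECs Q1(1) Q2(1) XO YM O_sub[of k] M_sub[OF k1] v_U[OF k1] by auto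
  have cA: "card A = k"
  proof -
    have i1: "D \<inter> EA = {}" using EAs by auto
    have i2: "(D \<union> EA) \<inter> P1 = {}" using EAO P1(1) XO by auto
    have i3: "(D \<union> EA \<union> P1) \<inter> P2 = {}" using EAO P2(1) YM P1(1) XO OM by blast
    have "card A = card D + card EA + card P1 + card P2"
      unfolding A_def using fD fEA P1(3) P2(3) i1 i2 i3 by (simp add: card_Un_disjoint)
    thus ?thesis using sA P1 P2 by simp
  qed
  have cC: "card C = k"
  proof -
    have i1: "D \<inter> EC = {}" using ECs by auto
    have i2: "(D \<union> EC) \<inter> Q1 = {}" using ECO Q1(1) XO by auto
    have i3: "(D \<union> EC \<union> Q1) \<inter> Q2 = {}" using ECO Q2(1) YM Q1(1) XO OM by blast
    have "card C = card D + card EC + card Q1 + card Q2"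
      unfolding C_def using fD fEC Q1(3) Q2(3) i1 i2 i3 by (simp add: card_Un_disjoint)
    thus ?thesis using sC Q1 Q2 by simp
  qed
  have AC: "A \<inter> C = D"
  proof -
    have "EA \<inter> (EC \<union> Q1 \<union> Q2) = {}" using EAC EAO Q1(1) Q2(1) XO YM by auto
    moreover have "P1 \<inter> (EC \<union> Q1 \<union> Q2) = {}" using ECO Q1(1) Q2(1) P1(1) XO YM OM by blast
    moreover have "P2 \<inter> (EC \<union> Q1 \<union> Q2) = {}" using ECO Q1(1) Q2(1) P2(1) XO YM OM by blast
    ultimately show ?thesis unfolding A_def C_def by auto
  qed
  have AO: "card (A \<inter> Os k) = card (D \<inter> Os k) + p1"
  proof -
    have "A \<inter> Os k = (D \<inter> Os k) \<union> P1" unfolding A_def using EAO P1(1) XO P2(1) YM OM by blast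
    moreover have "(D \<inter> Os k) \<inter> P1 = {}" using P1(1) XO by auto
    ultimately show ?thesis using fD P1 by (simp add: card_Un_disjoint)
  qed
  have CO: "card (C \<inter> Os k) = card (D \<inter> Os k) + q1"
  proof -
    have "C \<inter> Os k = (D \<inter> Os k) \<union> Q1" unfolding C_def using ECO Q1(1) XO Q2(1) YM OM by blast
    moreover have "(D \<inter> Os k) \<inter> Q1 = {}" using Q1(1) XO by auto
    ultimately show ?thesis using fD Q1 by (simp add: card_Un_disjoint)
  qed
  have AV: "A \<inter> {2*k-1, 2*k} = (D \<union> EA) \<inter> {2*k-1, 2*k}"
    unfolding A_def using P1(1) P2(1) XO YM n1 n2 by auto
  have CV: "C \<inter> {2*k-1, 2*k} = (D \<union> EC) \<inter> {2*k-1, 2*k}"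
    unfolding C_def using Q1(1) Q2(1) XO YM n1 n2 by auto
  show ?thesis using AU CU cA cC AC AO CO AV CV by blast
qed


definition good :: "nat \<Rightarrow> nat set \<Rightarrow> nat set \<Rightarrow> nat set \<Rightarrow> bool" where
  "good k D A C \<longleftrightarrow> A \<subseteq> Us k \<and> C \<subseteq> Us k \<and> card A = k \<and> card C = k \<and> A \<inter> C = D \<and> phi k A \<and> \<not> phi k C"

lemma card_OD: "card (Os k - D) = k - 1 - card (D \<inter> Os k)"
proof -
  have "Os k - D = Os k - (D \<inter> Os k)" by blast
  thus ?thesis by (simp add: card_Diff_subset)
qed

lemma card_MD: "k \<ge> 1 \<Longrightarrow> card (Ms k - D) = k - 1 - card (D \<inter> Ms k)"
proof -
  assume k1: "k \<ge> 1"
  have "Ms k - D = Ms k - (D \<inter> Ms k)" by blast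
  thus ?thesis using card_M[OF k1] by (simp add: card_Diff_subset)
qed

lemma mem2: "X \<inter> {p, q} = Y \<inter> {p, q} \<Longrightarrow> (p \<in> X \<longleftrightarrow> p \<in> Y) \<and> (q \<in> X \<longleftrightarrow> q \<in> Y)"
  by blast

lemma caseI:
  assumes k4: "k \<ge> 4" and ev: "even k" and DU: "D \<subseteq> Us k" and dk: "card D \<le> k - 1"
    and y: "2*k \<in> D" and v: "2*k-1 \<in> D"
  shows "\<exists>A C. good k D A C"
proof -
  have k1: "k \<ge> 1" using k4 by simp
  define a where "a = card (D \<inter> Os k)"
  define b where "b = card (D \<inter> Ms k)"
  have "D \<inter> {2*k-1, 2*k} = {2*k-1, 2*k}" using y v by auto
  hence c2: "card (D \<inter> {2*k-1, 2*k}) = 2" using k1 by simp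
  have cD: "card D = a + b + 2" using card_part[OF k1 DU] c2 unfolding a_def b_def by simp
  have x: "card (Os k - D) = k - 1 - a" unfolding a_def by (rule card_OD)
  have yy: "card (Ms k - D) = k - 1 - b" unfolding b_def by (rule card_MD[OF k1])
  define m where "m = k - (a + b + 2)"
  define p1 where "p1 = (if odd (a + m) then m else m - 1)"
  define q1 where "q1 = (if even a then 0 else 1::nat)"
  have m1: "m \<ge> 1" using dk cD unfolding m_def by simp
  have n1: "p1 + q1 \<le> card (Os k - D)" using m1 dk cD unfolding x p1_def q1_def m_def by auto
  have n2: "(m - p1) + (m - q1) \<le> card (Ms k - D)" using m1 dk cD unfolding yy p1_def q1_def m_def by auto
  have n3: "card D + card ({}::nat set) + p1 + (m - p1) = k" using m1 dk cD unfolding p1_def m_def by auto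
  have n4: "card D + card ({}::nat set) + q1 + (m - q1) = k" using m1 dk cD unfolding q1_def m_def by auto
  have n5: "odd (a + p1)" using m1 unfolding p1_def by auto
  have n6: "even (a + q1)" unfolding q1_def by auto
  obtain A C where AC: "A \<subseteq> Us k" "C \<subseteq> Us k" "card A = k" "card C = k" "A \<inter> C = D"
     "card (A \<inter> Os k) = a + p1" "card (C \<inter> Os k) = a + q1"
     "A \<inter> {2*k-1, 2*k} = (D \<union> {}) \<inter> {2*k-1, 2*k}" "C \<inter> {2*k-1, 2*k} = (D \<union> {}) \<inter> {2*k-1, 2*k}"
    using build[OF k1 DU _ _ _ n1 n2 n3 n4] unfolding a_def by auto
  have mA: "2*k \<in> A" "2*k-1 \<in> A" using mem2[OF AC(8)] y v by auto
  have mC: "2*k \<in> C" "2*k-1 \<in> C" using mem2[OF AC(9)] y v by auto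
  have "phi k A" using phi_plain[of k A] mA AC(6) n5 by simp
  moreover have "\<not> phi k C" using phi_plain[of k C] mC AC(7) n6 by simp
  ultimately show ?thesis unfolding good_def using AC by blast
qed


lemma caseII_big:
  assumes k4: "k \<ge> 4" and ev: "even k" and DU: "D \<subseteq> Us k" and dk: "card D \<le> k - 2"
    and y: "2*k \<notin> D" and v: "2*k-1 \<notin> D"
  shows "\<exists>A C. good k D A C"
proof -
  have k1: "k \<ge> 1" using k4 by simp
  define a where "a = card (D \<inter> Os k)"
  define b where "b = card (D \<inter> Ms k)"
  have "D \<inter> {2*k-1, 2*k} = {}" using y v by auto
  hence c2: "card (D \<inter> {2*k-1, 2*k}) = 0" by simp
  have cD: "card D = a + b" using card_part[OF k1 DU] c2 unfolding a_def b_def by simp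
  have x: "card (Os k - D) = k - 1 - a" unfolding a_def by (rule card_OD)
  have yy: "card (Ms k - D) = k - 1 - b" unfolding b_def by (rule card_MD[OF k1])
  have ne: "2*k-1 \<noteq> 2*k" using k1 by simp
  define m where "m = k - (a + b)"
  have m2: "m \<ge> 2" using dk cD k4 unfolding m_def by simp
  have meq: "m + (a + b) = k" using dk cD k4 unfolding m_def by simp
  show ?thesis
  proof (cases "odd a")
    case True
    define q1 where "q1 = (if even m then m - 1 else m - 2)"
    have n1: "0 + q1 \<le> card (Os k - D)" using m2 dk cD True unfolding x q1_def by (cases "even m") (use meq in auto)
    have a1: "a \<ge> 1" using True by (cases a) auto
    have n2: "(m - 2 - 0) + (m - q1) \<le> card (Ms k - D)" using m2 dk cD a1 unfolding yy q1_def by (cases "even m") (use meq in auto)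
    have n3: "card D + card {2*k-1, 2*k} + 0 + (m - 2 - 0) = k" using m2 dk cD ne using meq by auto
    have n4: "card D + card ({}::nat set) + q1 + (m - q1) = k" using m2 dk cD unfolding q1_def by (cases "even m") (use meq in auto)
    have n6: "even (a + q1)" using m2 True unfolding q1_def by auto
    have EA: "{2*k-1, 2*k} \<subseteq> {2*k-1, 2*k} - D" using y v by auto
    obtain A C where AC: "A \<subseteq> Us k" "C \<subseteq> Us k" "card A = k" "card C = k" "A \<inter> C = D"
       "card (A \<inter> Os k) = a + 0" "card (C \<inter> Os k) = a + q1"
       "A \<inter> {2*k-1, 2*k} = (D \<union> {2*k-1, 2*k}) \<inter> {2*k-1, 2*k}" "C \<inter> {2*k-1, 2*k} = (D \<union> {}) \<inter> {2*k-1, 2*k}"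
      using build[OF k1 DU EA _ _ n1 n2 n3 n4] unfolding a_def by auto
    have mA: "2*k \<in> A" "2*k-1 \<in> A" using mem2[OF AC(8)] by auto
    have mC: "2*k \<notin> C" "2*k-1 \<notin> C" using mem2[OF AC(9)] y v by auto
    have "phi k A" using phi_plain[of k A] mA AC(6) True by simp
    moreover have "\<not> phi k C" using phi_plain[of k C] mC AC(7) n6 by simp
    ultimately show ?thesis unfolding good_def using AC by blast
  next
    case False
    define p1 where "p1 = (if even m then m - 1 else m)"
    have bm: "odd m \<Longrightarrow> b \<ge> 1"
    proof (rule ccontr)
      assume "odd m" "\<not> b \<ge> 1"
      hence "b = 0" by simp
      hence "m + a = k" using meq by simp
      thus False using \<open>odd m\<close> False ev by (metis even_add)
    qed
    have n1: "p1 + 0 \<le> card (Os k - D)" using m2 dk cD bm unfolding x p1_def by (cases "even m") (use meq in auto)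
    have n2: "(m - p1) + (m - 2 - 0) \<le> card (Ms k - D)" using m2 dk cD unfolding yy p1_def by (cases "even m") (use meq in auto)
    have n3: "card D + card ({}::nat set) + p1 + (m - p1) = k" using m2 dk cD unfolding p1_def by (cases "even m") (use meq in auto)
    have n4: "card D + card {2*k-1, 2*k} + 0 + (m - 2 - 0) = k" using m2 dk cD ne using meq by auto
    have n5: "odd (a + p1)" using m2 False unfolding p1_def by auto
    have EC: "{2*k-1, 2*k} \<subseteq> {2*k-1, 2*k} - D" using y v by auto
    obtain A C where AC: "A \<subseteq> Us k" "C \<subseteq> Us k" "card A = k" "card C = k" "A \<inter> C = D"
       "card (A \<inter> Os k) = a + p1" "card (C \<inter> Os k) = a + 0"
       "A \<inter> {2*k-1, 2*k} = (D \<union> {}) \<inter> {2*k-1, 2*k}" "C \<inter> {2*k-1, 2*k} = (D \<union> {2*k-1, 2*k}) \<inter> {2*k-1, 2*k}"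
      using build[OF k1 DU _ EC _ n1 n2 n3 n4] unfolding a_def by auto
    have mA: "2*k \<notin> A" "2*k-1 \<notin> A" using mem2[OF AC(8)] y v by auto
    have mC: "2*k \<in> C" "2*k-1 \<in> C" using mem2[OF AC(9)] by auto
    have "phi k A" using phi_plain[of k A] mA AC(6) n5 by simp
    moreover have "\<not> phi k C" using phi_plain[of k C] mC AC(7) False by simp
    ultimately show ?thesis unfolding good_def using AC by blast
  qed
qed

lemma caseII_small:
  assumes k4: "k \<ge> 4" and ev: "even k" and DU: "D \<subseteq> Us k" and dk: "card D = k - 1"
    and y: "2*k \<notin> D" and v: "2*k-1 \<notin> D"
  shows "\<exists>A C. good k D A C"
proof -
  have k1: "k \<ge> 1" using k4 by simp
  define a where "a = card (D \<inter> Os k)"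
  define b where "b = card (D \<inter> Ms k)"
  have "D \<inter> {2*k-1, 2*k} = {}" using y v by auto
  hence c2: "card (D \<inter> {2*k-1, 2*k}) = 0" by simp
  have cD: "card D = a + b" using card_part[OF k1 DU] c2 unfolding a_def b_def by simp
  have x: "card (Os k - D) = k - 1 - a" unfolding a_def by (rule card_OD)
  have yy: "card (Ms k - D) = k - 1 - b" unfolding b_def by (rule card_MD[OF k1])
  have ne: "2*k-1 \<noteq> 2*k" using k1 by simp
  have ab: "a + b = k - 1" using cD dk by simp
  have ale: "a \<le> k - 1" unfolding a_def by (rule card_AO_le)
  consider (z) "a = 0" | (t) "a = k - 1" | (mid) "a \<ge> 1" "a \<le> k - 2" using ale by linarith
  then show ?thesis
  proof cases
    case z
    have n1: "0 + 0 \<le> card (Os k - D)" by simp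
    have n2: "0 + 0 \<le> card (Ms k - D)" by simp
    have n3: "card D + card {2*k-1} + 0 + 0 = k" using dk k4 by simp
    have n4: "card D + card {2*k} + 0 + 0 = k" using dk k4 by simp
    have EA: "{2*k-1} \<subseteq> {2*k-1, 2*k} - D" and EC: "{2*k} \<subseteq> {2*k-1, 2*k} - D" using y v by auto
    have EAC: "{2*k-1} \<inter> {2*k} = {}" using ne by auto
    obtain A C where AC: "A \<subseteq> Us k" "C \<subseteq> Us k" "card A = k" "card C = k" "A \<inter> C = D"
       "card (A \<inter> Os k) = a + 0" "card (C \<inter> Os k) = a + 0"
       "A \<inter> {2*k-1, 2*k} = (D \<union> {2*k-1}) \<inter> {2*k-1, 2*k}" "C \<inter> {2*k-1, 2*k} = (D \<union> {2*k}) \<inter> {2*k-1, 2*k}"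
      using build[OF k1 DU EA EC EAC n1 n2 n3 n4] unfolding a_def by auto
    have mA: "2*k \<notin> A" "2*k-1 \<in> A" using mem2[OF AC(8)] y v ne by auto
    have mC: "2*k \<in> C" "2*k-1 \<notin> C" using mem2[OF AC(9)] y v ne by auto
    have "phi k A" using phi_v[OF k4 ev AC(1) mA(2) mA(1)] AC(6) z by simp
    moreover have "\<not> phi k C" using nphi_y[OF k4 mC] AC(7) z k4 by simp
    ultimately show ?thesis unfolding good_def using AC by blast
  next
    case t
    have n1: "0 + 0 \<le> card (Os k - D)" by simp
    have n2: "1 + 0 \<le> card (Ms k - D)" using t ab k4 unfolding yy by simp
    have n3: "card D + card ({}::nat set) + 0 + 1 = k" using dk k4 by simp
    have n4: "card D + card {2*k} + 0 + 0 = k" using dk k4 by simp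
    have EC: "{2*k} \<subseteq> {2*k-1, 2*k} - D" using y v by auto
    obtain A C where AC: "A \<subseteq> Us k" "C \<subseteq> Us k" "card A = k" "card C = k" "A \<inter> C = D"
       "card (A \<inter> Os k) = a + 0" "card (C \<inter> Os k) = a + 0"
       "A \<inter> {2*k-1, 2*k} = (D \<union> {}) \<inter> {2*k-1, 2*k}" "C \<inter> {2*k-1, 2*k} = (D \<union> {2*k}) \<inter> {2*k-1, 2*k}"
      using build[OF k1 DU _ EC _ n1 n2 n3 n4] unfolding a_def by auto
    have mA: "2*k \<notin> A" "2*k-1 \<notin> A" using mem2[OF AC(8)] y v ne by auto
    have mC: "2*k \<in> C" "2*k-1 \<notin> C" using mem2[OF AC(9)] y v ne by auto
    have "phi k A" using phi_plain[of k A] mA AC(6) t ev k4 by simp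
    moreover have "\<not> phi k C" using nphi_y[OF k4 mC] AC(7) t by simp
    ultimately show ?thesis unfolding good_def using AC by blast
  next
    case mid
    define p1 where "p1 = (if even a then 1 else 0::nat)"
    define q1 where "q1 = (if even a then 0 else 1::nat)"
    have n1: "p1 + q1 \<le> card (Os k - D)" using mid unfolding x p1_def q1_def by auto
    have n2: "(1 - p1) + (1 - q1) \<le> card (Ms k - D)" using mid ab unfolding yy p1_def q1_def by auto
    have n3: "card D + card ({}::nat set) + p1 + (1 - p1) = k" using dk k4 unfolding p1_def by auto
    have n4: "card D + card ({}::nat set) + q1 + (1 - q1) = k" using dk k4 unfolding q1_def by auto
    obtain A C where AC: "A \<subseteq> Us k" "C \<subseteq> Us k" "card A = k" "card C = k" "A \<inter> C = D"
       "card (A \<inter> Os k) = a + p1" "card (C \<inter> Os k) = a + q1"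
       "A \<inter> {2*k-1, 2*k} = (D \<union> {}) \<inter> {2*k-1, 2*k}" "C \<inter> {2*k-1, 2*k} = (D \<union> {}) \<inter> {2*k-1, 2*k}"
      using build[OF k1 DU _ _ _ n1 n2 n3 n4] unfolding a_def by auto
    have mA: "2*k \<notin> A" "2*k-1 \<notin> A" using mem2[OF AC(8)] y v by auto
    have mC: "2*k \<notin> C" "2*k-1 \<notin> C" using mem2[OF AC(9)] y v by auto
    have "phi k A" using phi_plain[of k A] mA AC(6) unfolding p1_def by simp
    moreover have "\<not> phi k C" using phi_plain[of k C] mC AC(7) unfolding q1_def by simp
    ultimately show ?thesis unfolding good_def using AC by blast
  qed
qed


lemma caseIII_big:
  assumes k4: "k \<ge> 4" and ev: "even k" and DU: "D \<subseteq> Us k" and dk: "card D \<le> k - 2"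
    and y: "2*k \<in> D" and v: "2*k-1 \<notin> D"
  shows "\<exists>A C. good k D A C"
proof -
  have k1: "k \<ge> 1" using k4 by simp
  define a where "a = card (D \<inter> Os k)"
  define b where "b = card (D \<inter> Ms k)"
  have ne: "2*k-1 \<noteq> 2*k" using k1 by simp
  have "D \<inter> {2*k-1, 2*k} = {2*k}" using y v by auto
  hence c2: "card (D \<inter> {2*k-1, 2*k}) = 1" by simp
  have cD: "card D = a + b + 1" using card_part[OF k1 DU] c2 unfolding a_def b_def by simp
  have x: "card (Os k - D) = k - 1 - a" unfolding a_def by (rule card_OD)
  have yy: "card (Ms k - D) = k - 1 - b" unfolding b_def by (rule card_MD[OF k1])
  define m where "m = k - (a + b + 1)"
  have m2: "m \<ge> 2" using dk cD k4 unfolding m_def by simp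
  have meq: "m + (a + b + 1) = k" using dk cD k4 unfolding m_def by simp
  define p1 where "p1 = (if even a then 1 else 0::nat)"
  define q1 where "q1 = (if odd (a + m) then m - 1 else m - 2)"
  have a1: "odd a \<Longrightarrow> a \<ge> 1" by (cases a) auto
  have n1: "p1 + q1 \<le> card (Os k - D)" unfolding x p1_def q1_def by (cases "even a"; cases "odd (a+m)") (use meq m2 in auto)
  have n2: "(m - p1) + (m - 1 - q1) \<le> card (Ms k - D)" unfolding yy p1_def q1_def by (cases "even a"; cases "odd (a+m)") (use meq m2 a1 in auto)
  have n3: "card D + card ({}::nat set) + p1 + (m - p1) = k" using meq m2 cD unfolding p1_def by auto
  have n4: "card D + card {2*k-1} + q1 + (m - 1 - q1) = k" using meq m2 cD unfolding q1_def by auto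
  have n5: "odd (a + p1)" unfolding p1_def by auto
  have n5': "a + p1 \<noteq> k - 1" using meq m2 ev unfolding p1_def by (cases "even a") auto
  have n6: "even (a + q1)" using m2 unfolding q1_def by auto
  have EC: "{2*k-1} \<subseteq> {2*k-1, 2*k} - D" using v by auto
  obtain A C where AC: "A \<subseteq> Us k" "C \<subseteq> Us k" "card A = k" "card C = k" "A \<inter> C = D"
     "card (A \<inter> Os k) = a + p1" "card (C \<inter> Os k) = a + q1"
     "A \<inter> {2*k-1, 2*k} = (D \<union> {}) \<inter> {2*k-1, 2*k}" "C \<inter> {2*k-1, 2*k} = (D \<union> {2*k-1}) \<inter> {2*k-1, 2*k}"
    using build[OF k1 DU _ EC _ n1 n2 n3 n4] unfolding a_def by auto
  have mA: "2*k \<in> A" "2*k-1 \<notin> A" using mem2[OF AC(8)] y v by auto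
  have mC: "2*k \<in> C" "2*k-1 \<in> C" using mem2[OF AC(9)] y by auto
  have "phi k A" using phi_y[of k A] mA AC(6) n5 n5' by simp
  moreover have "\<not> phi k C" using phi_plain[of k C] mC AC(7) n6 by simp
  ultimately show ?thesis unfolding good_def using AC by blast
qed

lemma caseIII_small:
  assumes k4: "k \<ge> 4" and ev: "even k" and DU: "D \<subseteq> Us k" and dk: "card D = k - 1"
    and y: "2*k \<in> D" and v: "2*k-1 \<notin> D"
  shows "\<exists>A C. good k D A C"
proof -
  have k1: "k \<ge> 1" using k4 by simp
  define a where "a = card (D \<inter> Os k)"
  define b where "b = card (D \<inter> Ms k)"
  have ne: "2*k-1 \<noteq> 2*k" using k1 by simp
  have "D \<inter> {2*k-1, 2*k} = {2*k}" using y v by auto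
  hence c2: "card (D \<inter> {2*k-1, 2*k}) = 1" by simp
  have cD: "card D = a + b + 1" using card_part[OF k1 DU] c2 unfolding a_def b_def by simp
  have x: "card (Os k - D) = k - 1 - a" unfolding a_def by (rule card_OD)
  have yy: "card (Ms k - D) = k - 1 - b" unfolding b_def by (rule card_MD[OF k1])
  have ab: "a + b = k - 2" using cD dk k4 by simp
  have fD: "finite D" using finite_subset[OF DU fin_U(1)] .
  consider (e) "even a" "a \<le> k - 4" | (t2) "a = k - 2" | (o) "odd a" "a \<le> k - 5" | (t3) "a = k - 3"
  proof -
    have le: "a \<le> k - 2" using ab by simp
    obtain j where j: "k = 2*j" using ev by blast
    show ?thesis
    proof (cases "even a")
      case True
      then obtain i where i: "a = 2*i" by blast
      have "a = k - 2 \<or> a \<le> k - 4"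
      proof (cases "i + 1 = j")
        case True thus ?thesis using i j by linarith
      next
        case False
        hence "i + 2 \<le> j" using le i j k4 by presburger
        thus ?thesis using i j by linarith
      qed
      thus ?thesis using that True by blast
    next
      case False
      then obtain i where i: "a = 2*i+1" using oddE by blast
      have "a = k - 3 \<or> a \<le> k - 5"
      proof (cases "i + 2 = j")
        case True thus ?thesis using i j by linarith
      next
        case False
        hence "i + 3 \<le> j" using le i j k4 by presburger
        thus ?thesis using i j by linarith
      qed
      thus ?thesis using that False by blast
    qed
  qed
  then show ?thesis
  proof cases
    case e
    have n1: "1 + 0 \<le> card (Os k - D)" using e k4 unfolding x by simp
    have n2: "0 + 0 \<le> card (Ms k - D)" by simp
    have n3: "card D + card ({}::nat set) + 1 + 0 = k" using dk k4 by simp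
    have n4: "card D + card {2*k-1} + 0 + 0 = k" using dk k4 by simp
    have EC: "{2*k-1} \<subseteq> {2*k-1, 2*k} - D" using v by auto
    obtain A C where AC: "A \<subseteq> Us k" "C \<subseteq> Us k" "card A = k" "card C = k" "A \<inter> C = D"
       "card (A \<inter> Os k) = a + 1" "card (C \<inter> Os k) = a + 0"
       "A \<inter> {2*k-1, 2*k} = (D \<union> {}) \<inter> {2*k-1, 2*k}" "C \<inter> {2*k-1, 2*k} = (D \<union> {2*k-1}) \<inter> {2*k-1, 2*k}"
      using build[OF k1 DU _ EC _ n1 n2 n3 n4] unfolding a_def by auto
    have mA: "2*k \<in> A" "2*k-1 \<notin> A" using mem2[OF AC(8)] y v by auto
    have mC: "2*k \<in> C" "2*k-1 \<in> C" using mem2[OF AC(9)] y by auto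
    have "phi k A" using phi_y[of k A] mA AC(6) e k4 by simp
    moreover have "\<not> phi k C" using phi_plain[of k C] mC AC(7) e by simp
    ultimately show ?thesis unfolding good_def using AC by blast
  next
    case o
    have n1: "0 + 1 \<le> card (Os k - D)" using o k4 unfolding x by simp
    have n2: "0 + 0 \<le> card (Ms k - D)" by simp
    have n3: "card D + card {2*k-1} + 0 + 0 = k" using dk k4 by simp
    have n4: "card D + card ({}::nat set) + 1 + 0 = k" using dk k4 by simp
    have EA: "{2*k-1} \<subseteq> {2*k-1, 2*k} - D" using v by auto
    obtain A C where AC: "A \<subseteq> Us k" "C \<subseteq> Us k" "card A = k" "card C = k" "A \<inter> C = D"
       "card (A \<inter> Os k) = a + 0" "card (C \<inter> Os k) = a + 1"
       "A \<inter> {2*k-1, 2*k} = (D \<union> {2*k-1}) \<inter> {2*k-1, 2*k}" "C \<inter> {2*k-1, 2*k} = (D \<union> {}) \<inter> {2*k-1, 2*k}"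
      using build[OF k1 DU EA _ _ n1 n2 n3 n4] unfolding a_def by auto
    have mA: "2*k \<in> A" "2*k-1 \<in> A" using mem2[OF AC(8)] y by auto
    have mC: "2*k \<in> C" "2*k-1 \<notin> C" using mem2[OF AC(9)] y v by auto
    have "phi k A" using phi_plain[of k A] mA AC(6) o by simp
    moreover have "\<not> phi k C" using nphi_y[OF k4 mC] AC(7) o k4 by simp
    ultimately show ?thesis unfolding good_def using AC by blast
  next
    case t2
    have b0: "b = 0" using ab t2 k4 by simp
    have DM: "D \<inter> Ms k = {}" using b0 fD unfolding b_def by simp
    have "card (Os k - D) = 1" using x t2 k4 by simp
    then obtain w where w: "Os k - D = {w}" by (auto simp: card_Suc_eq)
    have wO: "w \<in> Os k" "w \<notin> D" using w by auto
    define u where "u = w + k - 1"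
    have uM: "u \<in> Ms k" using wO(1) k4 unfolding u_def Os_def Ms_def by auto
    have uD: "u \<notin> D" using uM DM by auto
    have uO: "u \<notin> Os k" using uM OM_disj[of k] by auto
    have uv: "u \<noteq> 2*k-1" "u \<noteq> 2*k" using uM v_notM[OF k1] by auto
    define A where "A = insert u D"
    define C where "C = insert (2*k-1) D"
    have AU: "A \<subseteq> Us k" unfolding A_def using DU uM M_sub[OF k1] by auto
    have CU: "C \<subseteq> Us k" unfolding C_def using DU v_U[OF k1] by auto
    have cA: "card A = k" unfolding A_def using uD fD dk k4 by simp
    have cC: "card C = k" unfolding C_def using v fD dk k4 by simp
    have AC: "A \<inter> C = D" unfolding A_def C_def using uD uv v by auto
    have AO: "A \<inter> Os k = D \<inter> Os k" unfolding A_def using uO by auto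
    have OA: "Os k - A = {w}" unfolding A_def using w uO by auto
    have AM: "A \<inter> Ms k = {u}" unfolding A_def using DM uM by auto
    have "psi k A" unfolding psi_def AO OA AM using t2 unfolding a_def u_def by simp
    hence "phi k A" unfolding phi_def A_def using y v uv by auto
    moreover have "\<not> phi k C"
    proof -
      have "C \<inter> Os k = D \<inter> Os k" unfolding C_def using v_notO[of k] by auto
      moreover have "odd (a) = False" using t2 ev k4 by simp
      ultimately show ?thesis unfolding phi_def C_def using y ne unfolding a_def by auto
    qed
    ultimately show ?thesis unfolding good_def using AU CU cA cC AC by blast
  next
    case t3
    have b1: "b = 1" using ab t3 k4 by simp
    obtain m0 where m0: "D \<inter> Ms k = {m0}" using b1 unfolding b_def by (auto simp: card_Suc_eq)
    have "card (Os k - D) = 2" using x t3 k4 by simp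
    then obtain w1 w2 where w: "Os k - D = {w1, w2}" "w1 \<noteq> w2" by (auto simp: card_Suc_eq numeral_2_eq_2)
    obtain q r where qr: "Os k - D = {q, r}" "q \<noteq> r" "r + k - 1 \<noteq> m0"
    proof (cases "w2 + k - 1 = m0")
      case True
      moreover have "w1 + k - 1 \<noteq> w2 + k - 1" using w(2) k1 by simp
      ultimately show ?thesis using that[of w2 w1] w by (auto simp: insert_commute)
    next
      case False
      then show ?thesis using that[of w1 w2] w by auto
    qed
    have qO: "q \<in> Os k" "q \<notin> D" using qr by auto
    have qv: "q \<noteq> 2*k-1" "q \<noteq> 2*k" "q \<notin> Ms k" using qO v_notO[of k] OM_disj[of k] by auto
    define A where "A = insert (2*k-1) D"
    define C where "C = insert q D"
    have AU: "A \<subseteq> Us k" unfolding A_def using DU v_U[OF k1] by auto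
    have CU: "C \<subseteq> Us k" unfolding C_def using DU qO O_sub[of k] by auto
    have cA: "card A = k" unfolding A_def using v fD dk k4 by simp
    have cC: "card C = k" unfolding C_def using qO fD dk k4 by simp
    have AC: "A \<inter> C = D" unfolding A_def C_def using qv by auto
    have "A \<inter> Os k = D \<inter> Os k" unfolding A_def using v_notO[of k] by auto
    hence "phi k A" unfolding phi_def A_def using y t3 ev k4 unfolding a_def by auto
    moreover have "\<not> phi k C"
    proof -
      have CO: "C \<inter> Os k = insert q (D \<inter> Os k)" unfolding C_def using qO by auto
      have cCO: "card (C \<inter> Os k) = k - 2" unfolding CO using qO fD t3 k4 unfolding a_def by simp
      have OC: "Os k - C = {r}" unfolding C_def using qr by auto
      have CM: "C \<inter> Ms k = {m0}" unfolding C_def using m0 qv by auto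
      have "\<not> psi k C" unfolding psi_def cCO OC CM using qr(3) ev k4 by auto
      thus ?thesis unfolding phi_def C_def using y v qv by auto
    qed
    ultimately show ?thesis unfolding good_def using AU CU cA cC AC by blast
  qed
qed


lemma caseIV_big:
  assumes k4: "k \<ge> 4" and ev: "even k" and DU: "D \<subseteq> Us k" and dk: "card D \<le> k - 2"
    and y: "2*k \<notin> D" and v: "2*k-1 \<in> D"
  shows "\<exists>A C. good k D A C"
proof -
  have k1: "k \<ge> 1" using k4 by simp
  define a where "a = card (D \<inter> Os k)"
  define b where "b = card (D \<inter> Ms k)"
  have ne: "2*k-1 \<noteq> 2*k" using k1 by simp
  have "D \<inter> {2*k-1, 2*k} = {2*k-1}" using y v by auto
  hence c2: "card (D \<inter> {2*k-1, 2*k}) = 1" by simp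
  have cD: "card D = a + b + 1" using card_part[OF k1 DU] c2 unfolding a_def b_def by simp
  have x: "card (Os k - D) = k - 1 - a" unfolding a_def by (rule card_OD)
  have yy: "card (Ms k - D) = k - 1 - b" unfolding b_def by (rule card_MD[OF k1])
  define m where "m = k - (a + b + 1)"
  have m2: "m \<ge> 2" using dk cD k4 unfolding m_def by simp
  have meq: "m + (a + b + 1) = k" using dk cD k4 unfolding m_def by simp
  define p1 where "p1 = (if even (a + m) then m - 1 else m - 2)"
  define q1 where "q1 = (if a = 0 then 2 else if even a then 0 else 1::nat)"
  have bz: "a = 0 \<Longrightarrow> even m \<Longrightarrow> b \<ge> 1"
  proof (rule ccontr)
    assume "a = 0" "even m" "\<not> b \<ge> 1"
    hence "m + 1 = k" using meq by simp
    thus False using \<open>even m\<close> ev by (metis even_add odd_one)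
  qed
  have n1: "p1 + q1 \<le> card (Os k - D)" unfolding x p1_def q1_def
    by (cases "a = 0"; cases "even a"; cases "even (a+m)") (use meq m2 bz in auto)
  have n2: "(m - 1 - p1) + (m - q1) \<le> card (Ms k - D)" unfolding yy p1_def q1_def
    by (cases "a = 0"; cases "even a"; cases "even (a+m)") (use meq m2 in auto)
  have n3: "card D + card {2*k} + p1 + (m - 1 - p1) = k" using meq m2 cD unfolding p1_def by auto
  have n4: "card D + card ({}::nat set) + q1 + (m - q1) = k" using meq m2 cD unfolding q1_def by auto
  have n5: "odd (a + p1)" using m2 unfolding p1_def by auto
  have n6: "even (a + q1)" "a + q1 \<ge> 2" unfolding q1_def by (cases "a = 0"; cases "even a"; auto)+
  have EA: "{2*k} \<subseteq> {2*k-1, 2*k} - D" using y by auto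
  obtain A C where AC: "A \<subseteq> Us k" "C \<subseteq> Us k" "card A = k" "card C = k" "A \<inter> C = D"
     "card (A \<inter> Os k) = a + p1" "card (C \<inter> Os k) = a + q1"
     "A \<inter> {2*k-1, 2*k} = (D \<union> {2*k}) \<inter> {2*k-1, 2*k}" "C \<inter> {2*k-1, 2*k} = (D \<union> {}) \<inter> {2*k-1, 2*k}"
    using build[OF k1 DU EA _ _ n1 n2 n3 n4] unfolding a_def by auto
  have mA: "2*k \<in> A" "2*k-1 \<in> A" using mem2[OF AC(8)] v by auto
  have mC: "2*k \<notin> C" "2*k-1 \<in> C" using mem2[OF AC(9)] y v by auto
  have "phi k A" using phi_plain[of k A] mA AC(6) n5 by simp
  moreover have "\<not> phi k C" using nphi_v[OF k4 ev AC(2) mC(2) mC(1)] AC(7) n6 by simp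
  ultimately show ?thesis unfolding good_def using AC by blast
qed

lemma caseIV_small:
  assumes k4: "k \<ge> 4" and ev: "even k" and DU: "D \<subseteq> Us k" and dk: "card D = k - 1"
    and y: "2*k \<notin> D" and v: "2*k-1 \<in> D"
  shows "\<exists>A C. good k D A C"
proof -
  have k1: "k \<ge> 1" using k4 by simp
  define a where "a = card (D \<inter> Os k)"
  define b where "b = card (D \<inter> Ms k)"
  have ne: "2*k-1 \<noteq> 2*k" using k1 by simp
  have "D \<inter> {2*k-1, 2*k} = {2*k-1}" using y v by auto
  hence c2: "card (D \<inter> {2*k-1, 2*k}) = 1" by simp
  have cD: "card D = a + b + 1" using card_part[OF k1 DU] c2 unfolding a_def b_def by simp
  have x: "card (Os k - D) = k - 1 - a" unfolding a_def by (rule card_OD)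
  have yy: "card (Ms k - D) = k - 1 - b" unfolding b_def by (rule card_MD[OF k1])
  have ab: "a + b = k - 2" using cD dk k4 by simp
  consider (o) "odd a" | (z) "a = 0" | (e) "even a" "a \<ge> 2"
  proof -
    show ?thesis
    proof (cases "odd a")
      case True thus ?thesis using that(1) by blast
    next
      case False
      show ?thesis
      proof (cases "a = 0")
        case True thus ?thesis using that(2) by blast
      next
        case F2: False
        have "a \<noteq> 1" using False by auto
        hence "a \<ge> 2" using F2 by linarith
        thus ?thesis using that(3) False by blast
      qed
    qed
  qed
  then show ?thesis
  proof cases
    case o
    have n1: "0 + 1 \<le> card (Os k - D)" using ab k4 o unfolding x by (cases a) auto
    have n2: "0 + 0 \<le> card (Ms k - D)" by simp
    have n3: "card D + card {2*k} + 0 + 0 = k" using dk k4 by simp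
    have n4: "card D + card ({}::nat set) + 1 + 0 = k" using dk k4 by simp
    have EA: "{2*k} \<subseteq> {2*k-1, 2*k} - D" using y by auto
    obtain A C where AC: "A \<subseteq> Us k" "C \<subseteq> Us k" "card A = k" "card C = k" "A \<inter> C = D"
       "card (A \<inter> Os k) = a + 0" "card (C \<inter> Os k) = a + 1"
       "A \<inter> {2*k-1, 2*k} = (D \<union> {2*k}) \<inter> {2*k-1, 2*k}" "C \<inter> {2*k-1, 2*k} = (D \<union> {}) \<inter> {2*k-1, 2*k}"
      using build[OF k1 DU EA _ _ n1 n2 n3 n4] unfolding a_def by auto
    have mA: "2*k \<in> A" "2*k-1 \<in> A" using mem2[OF AC(8)] v by auto
    have mC: "2*k \<notin> C" "2*k-1 \<in> C" using mem2[OF AC(9)] y v by auto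
    have a1: "a \<ge> 1" using o by (cases a) auto
    have "phi k A" using phi_plain[of k A] mA AC(6) o by simp
    moreover have "\<not> phi k C" using nphi_v[OF k4 ev AC(2) mC(2) mC(1)] AC(7) o a1 by simp
    ultimately show ?thesis unfolding good_def using AC by blast
  next
    case z
    have n1: "0 + 0 \<le> card (Os k - D)" by simp
    have n2: "1 + 0 \<le> card (Ms k - D)" using ab z k4 unfolding yy by simp
    have n3: "card D + card ({}::nat set) + 0 + 1 = k" using dk k4 by simp
    have n4: "card D + card {2*k} + 0 + 0 = k" using dk k4 by simp
    have EC: "{2*k} \<subseteq> {2*k-1, 2*k} - D" using y by auto
    obtain A C where AC: "A \<subseteq> Us k" "C \<subseteq> Us k" "card A = k" "card C = k" "A \<inter> C = D"
       "card (A \<inter> Os k) = a + 0" "card (C \<inter> Os k) = a + 0"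
       "A \<inter> {2*k-1, 2*k} = (D \<union> {}) \<inter> {2*k-1, 2*k}" "C \<inter> {2*k-1, 2*k} = (D \<union> {2*k}) \<inter> {2*k-1, 2*k}"
      using build[OF k1 DU _ EC _ n1 n2 n3 n4] unfolding a_def by auto
    have mA: "2*k \<notin> A" "2*k-1 \<in> A" using mem2[OF AC(8)] y v by auto
    have mC: "2*k \<in> C" "2*k-1 \<in> C" using mem2[OF AC(9)] v by auto
    have "phi k A" using phi_v[OF k4 ev AC(1) mA(2) mA(1)] AC(6) z by simp
    moreover have "\<not> phi k C" using phi_plain[of k C] mC AC(7) z by simp
    ultimately show ?thesis unfolding good_def using AC by blast
  next
    case e
    have n1: "1 + 0 \<le> card (Os k - D)" using ab e k4 unfolding x by simp
    have n2: "0 + 0 \<le> card (Ms k - D)" by simp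
    have n3: "card D + card ({}::nat set) + 1 + 0 = k" using dk k4 by simp
    have n4: "card D + card {2*k} + 0 + 0 = k" using dk k4 by simp
    have EC: "{2*k} \<subseteq> {2*k-1, 2*k} - D" using y by auto
    obtain A C where AC: "A \<subseteq> Us k" "C \<subseteq> Us k" "card A = k" "card C = k" "A \<inter> C = D"
       "card (A \<inter> Os k) = a + 1" "card (C \<inter> Os k) = a + 0"
       "A \<inter> {2*k-1, 2*k} = (D \<union> {}) \<inter> {2*k-1, 2*k}" "C \<inter> {2*k-1, 2*k} = (D \<union> {2*k}) \<inter> {2*k-1, 2*k}"
      using build[OF k1 DU _ EC _ n1 n2 n3 n4] unfolding a_def by auto
    have mA: "2*k \<notin> A" "2*k-1 \<in> A" using mem2[OF AC(8)] y v by auto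
    have mC: "2*k \<in> C" "2*k-1 \<in> C" using mem2[OF AC(9)] v by auto
    have "phi k A" using phi_v[OF k4 ev AC(1) mA(2) mA(1)] AC(6) e by simp
    moreover have "\<not> phi k C" using phi_plain[of k C] mC AC(7) e by simp
    ultimately show ?thesis unfolding good_def using AC by blast
  qed
qed


lemma all_cases:
  assumes k4: "k \<ge> 4" and ev: "even k" and DU: "D \<subseteq> Us k" and dk: "card D \<le> k - 1"
  shows "\<exists>A C. good k D A C"
proof (cases "card D = k - 1")
  case True
  show ?thesis
    using caseI[OF k4 ev DU dk] caseII_small[OF k4 ev DU True] caseIII_small[OF k4 ev DU True]
      caseIV_small[OF k4 ev DU True] by blast
next
  case False
  hence d2: "card D \<le> k - 2" using dk by simp
  show ?thesis
    using caseI[OF k4 ev DU dk] caseII_big[OF k4 ev DU d2] caseIII_big[OF k4 ev DU d2]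
      caseIV_big[OF k4 ev DU d2] by blast
qed

lemma card_Us: "card (Us k) = 2*k" by (simp add: Us_def)

lemma good_diff:
  assumes k4: "k \<ge> 4" and ev: "even k" and g: "good k D A C"
  shows "D \<in> diff_family (FF k)"
proof -
  have AU: "A \<subseteq> Us k" and CU: "C \<subseteq> Us k" and cA: "card A = k" and cC: "card C = k"
    and AC: "A \<inter> C = D" and pA: "phi k A" and pC: "\<not> phi k C" using g unfolding good_def by auto
  define B where "B = Us k - C"
  have BU: "B \<subseteq> Us k" unfolding B_def by auto
  have cB: "card B = k" unfolding B_def using card_Diff_subset[OF finite_subset[OF CU fin_U(1)] CU] cC card_Us[of k] by simp
  have pB: "phi k B" unfolding B_def using phi_compl[OF k4 ev CU] pC by simp
  have "A - B = D" unfolding B_def using AU AC by auto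
  moreover have "A \<in> FF k" "B \<in> FF k" unfolding FF_def using AU cA pA BU cB pB by auto
  ultimately show ?thesis unfolding diff_family_def by blast
qed

lemma FF_int:
  assumes k4: "k \<ge> 4" and ev: "even k"
  shows "intersecting (FF k)"
  unfolding intersecting_def
proof (intro ballI)
  fix A B assume A: "A \<in> FF k" and B: "B \<in> FF k"
  show "A \<inter> B \<noteq> {}"
  proof
    assume dis: "A \<inter> B = {}"
    have AU: "A \<subseteq> Us k" "card A = k" "phi k A" using A unfolding FF_def by auto
    have BU: "B \<subseteq> Us k" "card B = k" "phi k B" using B unfolding FF_def by auto
    have sub: "B \<subseteq> Us k - A" using BU(1) dis by auto
    have "card (Us k - A) = k" using card_Diff_subset[OF finite_subset[OF AU(1) fin_U(1)] AU(1)] AU(2) card_Us[of k] by simp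
    hence "B = Us k - A" using sub BU(2) card_subset_eq[of "Us k - A" B] by simp
    thus False using phi_compl[OF k4 ev AU(1)] AU(3) BU(3) by simp
  qed
qed

theorem theorem1:
  fixes k :: nat
  assumes "k \<ge> 4" and "even k"
  shows "\<exists>F. F \<subseteq> ksubsets {1..2*k} k \<and> intersecting F \<and>
            diff_family F = (\<Union>j\<in>{0..k-1}. ksubsets {1..2*k} j) \<and>
            ksubsets {1..2*k} (k-1) \<subseteq> diff_family F"
proof -
  have k4: "k \<ge> 4" and ev: "even k" using assms by auto
  have U: "Us k = {1..2*k}" by (simp add: Us_def)
  have sub: "FF k \<subseteq> ksubsets {1..2*k} k" unfolding FF_def ksubsets_def U[symmetric] by auto
  have int: "intersecting (FF k)" by (rule FF_int[OF k4 ev])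
  have eq: "diff_family (FF k) = (\<Union>j\<in>{0..k-1}. ksubsets {1..2*k} j)"
  proof
    show "diff_family (FF k) \<subseteq> (\<Union>j\<in>{0..k-1}. ksubsets {1..2*k} j)"
    proof
      fix X assume "X \<in> diff_family (FF k)"
      then obtain A B where X: "X = A - B" and A: "A \<in> FF k" and B: "B \<in> FF k"
        unfolding diff_family_def by blast
      have AU: "A \<subseteq> Us k" "card A = k" using A unfolding FF_def by auto
      have fA: "finite A" using finite_subset[OF AU(1) fin_U(1)] .
      have ne: "A \<inter> B \<noteq> {}" using int A B unfolding intersecting_def by blast
      have "card (A \<inter> B) \<ge> 1" using ne fA by (simp add: Suc_le_eq card_gt_0_iff)
      moreover have "card (A - B) = card A - card (A \<inter> B)" using fA by (simp add: card_Diff_subset_Int)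
      ultimately have "card X \<le> k - 1" using X AU(2) by simp
      moreover have "X \<subseteq> {1..2*k}" using X AU(1) U by auto
      ultimately show "X \<in> (\<Union>j\<in>{0..k-1}. ksubsets {1..2*k} j)" unfolding ksubsets_def by auto
    qed
  next
    show "(\<Union>j\<in>{0..k-1}. ksubsets {1..2*k} j) \<subseteq> diff_family (FF k)"
    proof
      fix D assume "D \<in> (\<Union>j\<in>{0..k-1}. ksubsets {1..2*k} j)"
      hence DU: "D \<subseteq> Us k" and dk: "card D \<le> k - 1" unfolding ksubsets_def U by auto
      obtain A C where "good k D A C" using all_cases[OF k4 ev DU dk] by blast
      thus "D \<in> diff_family (FF k)" by (rule good_diff[OF k4 ev])
    qed
  qed
  have last: "ksubsets {1..2*k} (k-1) \<subseteq> diff_family (FF k)" unfolding eq by auto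
  show ?thesis using sub int eq last by blast
qed

end
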